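(* Let $W$ be a complex reflection group acting on $V$ and let $g\in W$ satisfy $\ell_R(g)=\operatorname{codim}(V^g)$. Then: (1) every reflection $t$ with $t\le_{\mathcal R} g$ belongs to the parabolic closure $W_g$ of $g$; (2) for every parabolic subgroup $W_X\le W$ containing $g$, we have $\mathrm{Red}_W(g)=\mathrm{Red}_{W_X}(g)$.
   Context: $V$ is a finite-dimensional complex vector space with a Hermitian inner product; a (unitary) reflection is a unitary map whose fixed space is a hyperplane; a complex reflection group is a finite subgroup $W\le\mathrm{GL}(V)$ generated by reflections, with set of reflections $\mathcal R$. For $w\in W$, $V^w$ is its fixed space. The reflection length $\ell_R(g)$ is the minimal $k$ such that $g=t_1\cdots t_k$ with $t_i\in\mathcal R$; such a factorization of length $\ell_R(g)$ is reduced, and $\mathrm{Red}_W(g)$ denotes the set of tuples $(t_1,\dots,t_{\ell_R(g)})\in\mathcal R^{\ell_R(g)}$ with product $g$ (for a subgroup $W_X$, $\mathrm{Red}_{W_X}(g)$ uses reflections of $W_X$ and the reflection length in $W_X$). The absolute order is defined by $u\le_{\mathcal R}v$ iff $\ell_R(u)+\ell_R(u^{-1}v)=\ell_R(v)$. A parabolic subgroup is the pointwise stabilizer of a subset of $V$; the pointwise stabilizer of a flat (intersection of reflection hyperplanes) $X$ is denoted $W_X$. The parabolic closure $W_g$ of $g$ is the intersection of all parabolic subgroups containing $g$; it equals $W_{V^g}$. *)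

theory Defs
  imports "HOL-Analysis.Analysis"
begin

text \<open>V is modelled as complex^'n with the standard Hermitian inner product;
  elements of GL(V) are complex n x n matrices acting by (*v).\<close>

definition adjoint_mat :: "complex^'n^'n \<Rightarrow> complex^'n^'n" where
  "adjoint_mat A = (\<chi> i j. cnj (A $ j $ i))"

definition unitary_mat :: "complex^'n^'n \<Rightarrow> bool" where
  "unitary_mat A \<longleftrightarrow> A ** adjoint_mat A = mat 1 \<and> adjoint_mat A ** A = mat 1"

definition fixed_space :: "complex^'n^'n \<Rightarrow> (complex^'n) set" where
  "fixed_space w = {v. w *v v = v}"

definition codim :: "(complex^'n) set \<Rightarrow> nat" where
  "codim U = CARD('n) - vec.dim U"

definition is_reflection :: "complex^'n^'n \<Rightarrow> bool" where
  "is_reflection t \<longleftrightarrow> unitary_mat t \<and> codim (fixed_space t) = 1"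

definition reflections :: "(complex^'n^'n) set \<Rightarrow> (complex^'n^'n) set" where
  "reflections W = {t \<in> W. is_reflection t}"

definition mat_prod_list :: "(complex^'n^'n) list \<Rightarrow> complex^'n^'n" where
  "mat_prod_list ts = foldr (**) ts (mat 1)"

definition complex_reflection_group :: "(complex^'n^'n) set \<Rightarrow> bool" where
  "complex_reflection_group W \<longleftrightarrow>
     finite W \<and> mat 1 \<in> W \<and>
     (\<forall>a\<in>W. \<forall>b\<in>W. a ** b \<in> W) \<and>
     (\<forall>a\<in>W. invertible a \<and> matrix_inv a \<in> W) \<and>
     W = {mat_prod_list ts | ts. set ts \<subseteq> reflections W}"

definition refl_length :: "(complex^'n^'n) set \<Rightarrow> complex^'n^'n \<Rightarrow> nat" where
  "refl_length W g =
     (LEAST k. \<exists>ts. length ts = k \<and> set ts \<subseteq> reflections W \<and> mat_prod_list ts = g)"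

definition Red :: "(complex^'n^'n) set \<Rightarrow> complex^'n^'n \<Rightarrow> (complex^'n^'n) list set" where
  "Red W g = {ts. length ts = refl_length W g \<and> set ts \<subseteq> reflections W \<and> mat_prod_list ts = g}"

definition abs_le :: "(complex^'n^'n) set \<Rightarrow> complex^'n^'n \<Rightarrow> complex^'n^'n \<Rightarrow> bool" where
  "abs_le W u v \<longleftrightarrow> refl_length W u + refl_length W (matrix_inv u ** v) = refl_length W v"

definition pointwise_stab :: "(complex^'n^'n) set \<Rightarrow> (complex^'n) set \<Rightarrow> (complex^'n^'n) set" where
  "pointwise_stab W A = {w \<in> W. \<forall>v\<in>A. w *v v = v}"

definition parabolic_subgroup :: "(complex^'n^'n) set \<Rightarrow> (complex^'n^'n) set \<Rightarrow> bool" where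
  "parabolic_subgroup W P \<longleftrightarrow> (\<exists>A. P = pointwise_stab W A)"

definition parabolic_closure :: "(complex^'n^'n) set \<Rightarrow> complex^'n^'n \<Rightarrow> (complex^'n^'n) set" where
  "parabolic_closure W g = \<Inter>{P. parabolic_subgroup W P \<and> g \<in> P}"

end

theory Submission
  imports Defs
begin

definition fixI :: "(complex^'n^'n) list \<Rightarrow> (complex^'n) set" where
  "fixI ts = {v. \<forall>t\<in>set ts. t *v v = v}"

lemma subspace_fixed: "vec.subspace (fixed_space (A::complex^'n^'n))"
  unfolding vec.subspace_def fixed_space_def
  by (auto simp: vec.add vec.scale)

lemma subspace_fixI: "vec.subspace (fixI ts)"
  unfolding vec.subspace_def fixI_def
  by (auto simp: vec.add vec.scale)

lemma fixI_sub: "fixI ts \<subseteq> fixed_space (mat_prod_list ts)"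
proof (induction ts)
  case Nil
  then show ?case by (auto simp: fixed_space_def mat_prod_list_def)
next
  case (Cons t ts)
  show ?case
  proof
    fix v assume v: "v \<in> fixI (t # ts)"
    then have "v \<in> fixI ts" by (auto simp: fixI_def)
    with Cons have "mat_prod_list ts *v v = v" by (auto simp: fixed_space_def)
    moreover have "t *v v = v" using v by (auto simp: fixI_def)
    ultimately show "v \<in> fixed_space (mat_prod_list (t # ts))"
      by (simp add: fixed_space_def mat_prod_list_def matrix_vector_mul_assoc[symmetric])
  qed
qed

lemma codim_Int:
  assumes "vec.subspace S" "vec.subspace T"
  shows "codim (S \<inter> (T::(complex^'n) set)) \<le> codim S + codim T"
proof -
  have "vec.dim {x + y |x y. x \<in> S \<and> y \<in> T} + vec.dim (S \<inter> T) = vec.dim S + vec.dim T"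
    using vec.dim_sums_Int[OF assms] .
  moreover have "vec.dim {x + y |x y. x \<in> S \<and> y \<in> T} \<le> CARD('n)"
    by (rule dim_subset_UNIV_cart_gen)
  moreover have "vec.dim S \<le> CARD('n)" "vec.dim T \<le> CARD('n)"
    by (rule dim_subset_UNIV_cart_gen)+
  ultimately show ?thesis unfolding codim_def by linarith
qed

lemma codim_UNIV: "codim (UNIV::(complex^'n) set) = 0"
  unfolding codim_def by (metis vec_dim_card diff_self_eq_0)

lemma codim_fixI:
  assumes "\<forall>t\<in>set ts. is_reflection t"
  shows "codim (fixI ts) \<le> length ts"
  using assms
proof (induction ts)
  case Nil
  show ?case by (simp add: fixI_def codim_UNIV)
next
  case (Cons t ts)
  have e: "fixI (t # ts) = fixed_space t \<inter> fixI ts"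
    by (auto simp: fixI_def fixed_space_def)
  have "codim (fixed_space t) = 1" using Cons.prems by (simp add: is_reflection_def)
  then show ?case using e codim_Int[OF subspace_fixed subspace_fixI, of t ts] Cons by simp
qed

lemma keyK:
  assumes "\<forall>t\<in>set ts. is_reflection t"
    and "length ts \<le> codim (fixed_space (mat_prod_list ts))"
    and "t \<in> set ts"
  shows "fixed_space (mat_prod_list ts) \<subseteq> fixed_space t"
proof -
  let ?G = "fixed_space (mat_prod_list ts)"
  have c: "codim (fixI ts) \<le> codim ?G" using codim_fixI[OF assms(1)] assms(2) by simp
  have "vec.dim ?G \<le> CARD('a)" "vec.dim (fixI ts) \<le> CARD('a)"
    by (rule dim_subset_UNIV_cart_gen)+
  with c have "vec.dim ?G \<le> vec.dim (fixI ts)" unfolding codim_def by linarith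
  then have "fixI ts = ?G"
    using vec.subspace_dim_equal[OF subspace_fixI subspace_fixed fixI_sub] by blast
  then show ?thesis using assms(3) by (auto simp: fixI_def fixed_space_def)
qed

lemma exists_fact:
  assumes "complex_reflection_group W" "g \<in> W"
  shows "\<exists>ts. set ts \<subseteq> reflections W \<and> mat_prod_list ts = g"
proof -
  have "W = {mat_prod_list ts |ts. set ts \<subseteq> reflections W}"
    using assms unfolding complex_reflection_group_def by blast
  then have "g \<in> {mat_prod_list ts |ts. set ts \<subseteq> reflections W}" using assms(2) by metis
  then show ?thesis by blast
qed

lemma refl_length_ex:
  assumes "\<exists>ts. set ts \<subseteq> reflections W \<and> mat_prod_list ts = g"
  shows "\<exists>ts. length ts = refl_length W g \<and> set ts \<subseteq> reflections W \<and> mat_prod_list ts = g"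
proof -
  from assms obtain ts where "set ts \<subseteq> reflections W \<and> mat_prod_list ts = g" by blast
  then have "\<exists>k ts. length ts = k \<and> set ts \<subseteq> reflections W \<and> mat_prod_list ts = g" by blast
  then show ?thesis unfolding refl_length_def by (rule LeastI_ex)
qed

lemma refl_length_le:
  assumes "set ts \<subseteq> reflections W" "mat_prod_list ts = g"
  shows "refl_length W g \<le> length ts"
  unfolding refl_length_def using assms by (intro Least_le) blast

lemma refl_not_id: "is_reflection t \<Longrightarrow> t \<noteq> mat 1"
proof
  assume "is_reflection t" "t = mat 1"
  then have "fixed_space t = UNIV" by (simp add: fixed_space_def)
  then have "codim (fixed_space t) = 0" by (simp add: codim_UNIV)
  with \<open>is_reflection t\<close> show False by (simp add: is_reflection_def)
qed

lemma refl_length_pos: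
  assumes "t \<in> reflections W"
  shows "refl_length W t \<noteq> 0"
proof
  assume "refl_length W t = 0"
  moreover have "\<exists>ts. length ts = refl_length W t \<and> set ts \<subseteq> reflections W \<and> mat_prod_list ts = t"
    by (rule refl_length_ex) (rule exI[of _ "[t]"], use assms in \<open>simp add: mat_prod_list_def\<close>)
  ultimately have "mat 1 = t" by (auto simp: mat_prod_list_def)
  with assms refl_not_id show False by (auto simp: reflections_def)
qed

lemma inv_right:
  assumes "invertible (A::complex^'n^'n)"
  shows "A ** matrix_inv A = mat 1"
proof -
  have "\<exists>A'. A ** A' = mat 1 \<and> A' ** A = mat 1" using assms by (simp add: invertible_def)
  then show ?thesis unfolding matrix_inv_def by (metis (mono_tags, lifting) someI_ex)
qed

theorem mainTheorem3:
  fixes W :: "(complex^'n^'n) set" and g :: "complex^'n^'n"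
  assumes "complex_reflection_group W"
    and "g \<in> W"
    and "refl_length W g = codim (fixed_space g)"
  shows "(\<forall>t\<in>reflections W. abs_le W t g \<longrightarrow> t \<in> parabolic_closure W g)
       \<and> (\<forall>P. parabolic_subgroup W P \<and> g \<in> P \<longrightarrow> Red W g = Red P g)"
proof
  have grp: "finite W" "\<forall>a\<in>W. \<forall>b\<in>W. a ** b \<in> W" "\<forall>a\<in>W. invertible a \<and> matrix_inv a \<in> W"
    using assms(1) unfolding complex_reflection_group_def by auto
  have stab: "fixed_space g \<subseteq> fixed_space t"
    if R: "set ts \<subseteq> reflections W" "mat_prod_list ts = g" "length ts \<le> refl_length W g"
      and t: "t \<in> set ts" for ts t
  proof -
    have "\<forall>t\<in>set ts. is_reflection t" using R by (auto simp: reflections_def)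
    from keyK[OF this _ t] R assms(3) show ?thesis by simp
  qed
  have inP: "t \<in> pointwise_stab W A"
    if "g \<in> pointwise_stab W A" "t \<in> W" "fixed_space g \<subseteq> fixed_space t" for A t
    using that by (auto simp: pointwise_stab_def fixed_space_def)
  show "\<forall>t\<in>reflections W. abs_le W t g \<longrightarrow> t \<in> parabolic_closure W g"
  proof (intro ballI impI)
    fix t assume t: "t \<in> reflections W" and le: "abs_le W t g"
    have tW: "t \<in> W" using t by (simp add: reflections_def)
    let ?h = "matrix_inv t ** g"
    have hW: "?h \<in> W" using grp tW assms(2) by auto
    obtain ts where ts: "length ts = refl_length W ?h" "set ts \<subseteq> reflections W" "mat_prod_list ts = ?h"
      using refl_length_ex[OF exists_fact[OF assms(1) hW]] by blast
    have prod: "mat_prod_list (t # ts) = g"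
      using ts(3) inv_right[of t] grp tW
      by (simp add: mat_prod_list_def matrix_mul_assoc)
    have "length (t # ts) \<le> refl_length W g"
      using le refl_length_pos[OF t] ts(1) unfolding abs_le_def by simp
    then have fs: "fixed_space g \<subseteq> fixed_space t"
      using stab[of "t # ts" t] ts t prod by simp
    show "t \<in> parabolic_closure W g"
      unfolding parabolic_closure_def parabolic_subgroup_def
      using inP[OF _ tW fs] by auto
  qed
  show "\<forall>P. parabolic_subgroup W P \<and> g \<in> P \<longrightarrow> Red W g = Red P g"
  proof (intro allI impI)
    fix P assume "parabolic_subgroup W P \<and> g \<in> P"
    then obtain A where PA: "P = pointwise_stab W A" and gP: "g \<in> P"
      by (auto simp: parabolic_subgroup_def)
    have PW: "P \<subseteq> W" using PA by (auto simp: pointwise_stab_def)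
    have RPW: "reflections P \<subseteq> reflections W" using PW by (auto simp: reflections_def)
    have sub: "set ts \<subseteq> reflections P"
      if R: "set ts \<subseteq> reflections W" "mat_prod_list ts = g" "length ts \<le> refl_length W g" for ts
    proof
      fix t assume t: "t \<in> set ts"
      then have tW: "t \<in> W" "is_reflection t" using R by (auto simp: reflections_def)
      have "t \<in> P" using inP[OF gP[unfolded PA] tW(1) stab[OF R t]] PA by simp
      then show "t \<in> reflections P" using tW by (simp add: reflections_def)
    qed
    obtain ts0 where ts0: "length ts0 = refl_length W g" "set ts0 \<subseteq> reflections W" "mat_prod_list ts0 = g"
      using refl_length_ex[OF exists_fact[OF assms(1,2)]] by blast
    have "set ts0 \<subseteq> reflections P" using sub ts0 by simp
    then have le1: "refl_length P g \<le> refl_length W g"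
      using refl_length_le[of ts0 P g] ts0 by simp
    obtain ts1 where ts1: "length ts1 = refl_length P g" "set ts1 \<subseteq> reflections P" "mat_prod_list ts1 = g"
      using refl_length_ex[of P g] \<open>set ts0 \<subseteq> reflections P\<close> ts0(3) by blast
    have "refl_length W g \<le> refl_length P g"
      using refl_length_le[of ts1 W g] ts1 RPW by simp
    with le1 have eq: "refl_length P g = refl_length W g" by simp
    show "Red W g = Red P g"
    proof
      show "Red W g \<subseteq> Red P g"
      proof
        fix ts assume "ts \<in> Red W g"
        then have R: "length ts = refl_length W g" "set ts \<subseteq> reflections W" "mat_prod_list ts = g"
          by (auto simp: Red_def)
        then have "set ts \<subseteq> reflections P" using sub[of ts] by simp
        then show "ts \<in> Red P g" using R eq by (simp add: Red_def)
      qed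
      show "Red P g \<subseteq> Red W g"
        using RPW eq by (auto simp: Red_def)
    qed
  qed
qed

end
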